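(* Let $A$ be a subring of a prime ring $B$ that is left or right Goldie, and let $t$ be the Goldie rank of $B$. Let $N$ be the prime radical of $A$. Then $N^t=0$.
   Context: The prime radical of a ring is the intersection of its prime ideals. The Goldie rank of a prime left (or right) Goldie ring is the length of its (simple artinian) Goldie quotient ring as a module over itself. *)

theory Defs
  imports "HOL-Algebra.Algebra"
begin

definition opp_ring :: "('a, 'b) ring_scheme \<Rightarrow> ('a, 'b) ring_scheme" where
  "opp_ring R = R\<lparr>mult := (\<lambda>x y. y \<otimes>\<^bsub>R\<^esub> x)\<rparr>"

definition left_ideal :: "'a set \<Rightarrow> ('a, 'b) ring_scheme \<Rightarrow> bool" where
  "left_ideal I R \<longleftrightarrow> additive_subgroup I R \<and>
     (\<forall>r\<in>carrier R. \<forall>a\<in>I. r \<otimes>\<^bsub>R\<^esub> a \<in> I)"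

text \<open>Prime ideal of a (not necessarily commutative) ring: a proper ideal P such that
  IJ \<subseteq> P implies I \<subseteq> P or J \<subseteq> P for ideals I, J (IJ \<subseteq> P iff all products lie in P).\<close>
definition nc_prime_ideal :: "('a, 'b) ring_scheme \<Rightarrow> 'a set \<Rightarrow> bool" where
  "nc_prime_ideal R P \<longleftrightarrow> ideal P R \<and> P \<noteq> carrier R \<and>
     (\<forall>I J. ideal I R \<longrightarrow> ideal J R \<longrightarrow> (\<forall>i\<in>I. \<forall>j\<in>J. i \<otimes>\<^bsub>R\<^esub> j \<in> P)
        \<longrightarrow> I \<subseteq> P \<or> J \<subseteq> P)"

definition prime_ring :: "('a, 'b) ring_scheme \<Rightarrow> bool" where
  "prime_ring R \<longleftrightarrow> ring R \<and> nc_prime_ideal R {\<zero>\<^bsub>R\<^esub>}"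

definition prime_radical :: "('a, 'b) ring_scheme \<Rightarrow> 'a set" where
  "prime_radical R = carrier R \<inter> \<Inter>{P. nc_prime_ideal R P}"

definition left_annihilator :: "('a, 'b) ring_scheme \<Rightarrow> 'a set \<Rightarrow> 'a set" where
  "left_annihilator R S = {r. r \<in> carrier R \<and> (\<forall>y\<in>S. r \<otimes>\<^bsub>R\<^esub> y = \<zero>\<^bsub>R\<^esub>)}"

text \<open>Left Goldie: ACC on left annihilators and no infinite direct sum of nonzero left ideals.\<close>
definition left_goldie :: "('a, 'b) ring_scheme \<Rightarrow> bool" where
  "left_goldie R \<longleftrightarrow> ring R \<and>
     \<not> (\<exists>(Y::nat \<Rightarrow> 'a set). (\<forall>n. Y n \<subseteq> carrier R) \<and>
          (\<forall>n. left_annihilator R (Y n) \<subset> left_annihilator R (Y (Suc n)))) \<and>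
     \<not> (\<exists>(L::nat \<Rightarrow> 'a set). (\<forall>n. left_ideal (L n) R \<and> L n \<noteq> {\<zero>\<^bsub>R\<^esub>}) \<and>
          (\<forall>n x. (\<forall>i\<le>n. x i \<in> L i) \<longrightarrow> finsum R x {..n} = \<zero>\<^bsub>R\<^esub> \<longrightarrow>
                 (\<forall>i\<le>n. x i = \<zero>\<^bsub>R\<^esub>)))"

definition right_goldie :: "('a, 'b) ring_scheme \<Rightarrow> bool" where
  "right_goldie R \<longleftrightarrow> left_goldie (opp_ring R)"

definition regular_elem :: "('a, 'b) ring_scheme \<Rightarrow> 'a \<Rightarrow> bool" where
  "regular_elem R s \<longleftrightarrow> s \<in> carrier R \<and>
     (\<forall>x\<in>carrier R. s \<otimes>\<^bsub>R\<^esub> x = \<zero>\<^bsub>R\<^esub> \<longrightarrow> x = \<zero>\<^bsub>R\<^esub>) \<and>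
     (\<forall>x\<in>carrier R. x \<otimes>\<^bsub>R\<^esub> s = \<zero>\<^bsub>R\<^esub> \<longrightarrow> x = \<zero>\<^bsub>R\<^esub>)"

definition classical_left_quotient ::
  "('a, 'b) ring_scheme \<Rightarrow> ('q, 'c) ring_scheme \<Rightarrow> ('a \<Rightarrow> 'q) \<Rightarrow> bool" where
  "classical_left_quotient R Q phi \<longleftrightarrow> ring R \<and> ring Q \<and> phi \<in> ring_hom R Q \<and>
     inj_on phi (carrier R) \<and>
     (\<forall>s. regular_elem R s \<longrightarrow> phi s \<in> Units Q) \<and>
     (\<forall>q\<in>carrier Q. \<exists>s a. regular_elem R s \<and> a \<in> carrier R \<and>
        q = inv\<^bsub>Q\<^esub> (phi s) \<otimes>\<^bsub>Q\<^esub> phi a)"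

definition classical_right_quotient ::
  "('a, 'b) ring_scheme \<Rightarrow> ('q, 'c) ring_scheme \<Rightarrow> ('a \<Rightarrow> 'q) \<Rightarrow> bool" where
  "classical_right_quotient R Q phi \<longleftrightarrow> classical_left_quotient (opp_ring R) (opp_ring Q) phi"

text \<open>Length n of R as a left module over itself (submodules = left ideals): there is a strictly
  increasing chain of left ideals of length n and none of length n+1.\<close>
definition left_length :: "('a, 'b) ring_scheme \<Rightarrow> nat \<Rightarrow> bool" where
  "left_length R n \<longleftrightarrow>
     (\<exists>(L::nat \<Rightarrow> 'a set). (\<forall>i\<le>n. left_ideal (L i) R) \<and> (\<forall>i<n. L i \<subset> L (Suc i))) \<and>
     \<not> (\<exists>(L::nat \<Rightarrow> 'a set). (\<forall>i\<le>Suc n. left_ideal (L i) R) \<and> (\<forall>i<Suc n. L i \<subset> L (Suc i)))"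

definition right_length :: "('a, 'b) ring_scheme \<Rightarrow> nat \<Rightarrow> bool" where
  "right_length R n \<longleftrightarrow> left_length (opp_ring R) n"

end

theory Submission
  imports Defs
begin

lemma left_idealI':
  assumes R: "ring R" and "I \<subseteq> carrier R" "\<zero>\<^bsub>R\<^esub> \<in> I"
    and "\<And>a b. a\<in>I \<Longrightarrow> b\<in>I \<Longrightarrow> a \<oplus>\<^bsub>R\<^esub> b \<in> I"
    and "\<And>a. a\<in>I \<Longrightarrow> \<ominus>\<^bsub>R\<^esub> a \<in> I"
    and "\<And>r a. r \<in> carrier R \<Longrightarrow> a\<in>I \<Longrightarrow> r \<otimes>\<^bsub>R\<^esub> a \<in> I"
  shows "left_ideal I R"
proof -
  interpret ring R by fact
  have "subgroup I (add_monoid R)"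
    by (rule add.subgroupI) (use assms in \<open>auto simp: a_inv_def\<close>)
  then show ?thesis unfolding left_ideal_def using assms(6) additive_subgroupI by blast
qed

lemma left_idealD:
  assumes "left_ideal I R"
  shows "I \<subseteq> carrier R" "\<zero>\<^bsub>R\<^esub> \<in> I" "\<And>a b. a\<in>I \<Longrightarrow> b\<in>I \<Longrightarrow> a \<oplus>\<^bsub>R\<^esub> b \<in> I"
    "\<And>a. a\<in>I \<Longrightarrow> \<ominus>\<^bsub>R\<^esub> a \<in> I"
    "\<And>r a. r \<in> carrier R \<Longrightarrow> a\<in>I \<Longrightarrow> r \<otimes>\<^bsub>R\<^esub> a \<in> I"
proof -
  have S: "additive_subgroup I R" using assms unfolding left_ideal_def by simp
  show "I \<subseteq> carrier R" by (rule additive_subgroup.a_subset[OF S])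
  show "\<zero>\<^bsub>R\<^esub> \<in> I" by (rule additive_subgroup.zero_closed[OF S])
  show "\<And>a b. a\<in>I \<Longrightarrow> b\<in>I \<Longrightarrow> a \<oplus>\<^bsub>R\<^esub> b \<in> I" by (rule additive_subgroup.a_closed[OF S])
  show "\<And>a. a\<in>I \<Longrightarrow> \<ominus>\<^bsub>R\<^esub> a \<in> I" by (rule additive_subgroup.a_inv_closed[OF S])
  show "\<And>r a. r \<in> carrier R \<Longrightarrow> a\<in>I \<Longrightarrow> r \<otimes>\<^bsub>R\<^esub> a \<in> I"
    using assms unfolding left_ideal_def by blast
qed

definition wrds :: "'a set \<Rightarrow> nat \<Rightarrow> 'a list set" where
  "wrds G k = {xs. length xs = k \<and> set xs \<subseteq> G}"

definition lprod :: "('a, 'b) ring_scheme \<Rightarrow> 'a list \<Rightarrow> 'a" where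
  "lprod R xs = foldr (\<otimes>\<^bsub>R\<^esub>) xs \<one>\<^bsub>R\<^esub>"

lemma lprod_Nil[simp]: "lprod R [] = \<one>\<^bsub>R\<^esub>" and lprod_Cons[simp]: "lprod R (x#xs) = x \<otimes>\<^bsub>R\<^esub> lprod R xs"
  by (simp_all add: lprod_def)

lemma lprod_closed: "ring R \<Longrightarrow> set xs \<subseteq> carrier R \<Longrightarrow> lprod R xs \<in> carrier R"
  by (induction xs) (auto intro: ring.ring_simprules)

lemma lprod_append: "ring R \<Longrightarrow> set xs \<subseteq> carrier R \<Longrightarrow> set ys \<subseteq> carrier R \<Longrightarrow>
   lprod R (xs @ ys) = lprod R xs \<otimes>\<^bsub>R\<^esub> lprod R ys"
  by (induction xs) (auto simp: lprod_closed monoid.m_assoc ring.is_monoid)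

lemma lprod_snoc: "ring R \<Longrightarrow> set xs \<subseteq> carrier R \<Longrightarrow> y \<in> carrier R \<Longrightarrow>
   lprod R (xs @ [y]) = lprod R xs \<otimes>\<^bsub>R\<^esub> y"
  by (simp add: lprod_append monoid.r_one[OF ring.is_monoid])

lemma lprod_map: "h \<in> ring_hom R S \<Longrightarrow> set xs \<subseteq> carrier R \<Longrightarrow> ring R \<Longrightarrow>
   lprod S (map h xs) = h (lprod R xs)"
  by (induction xs) (auto simp: ring_hom_one ring_hom_mult lprod_closed)

lemma chain_lemma:
  fixes Q :: "('q, 'c) ring_scheme" (structure)
  assumes Q: "ring Q" and len: "left_length Q t" and H: "H \<subseteq> carrier Q"
    and nil: "\<forall>xs\<in>wrds H m. lprod Q xs = \<zero>\<^bsub>Q\<^esub>"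
  shows "\<forall>xs\<in>wrds H t. lprod Q xs = \<zero>\<^bsub>Q\<^esub>"
proof (rule ccontr)
  interpret ring Q by fact
  assume "\<not> ?thesis"
  then obtain xs where xs: "xs \<in> wrds H t" "lprod Q xs \<noteq> \<zero>" by blast
  define gen where "gen S = {q\<in>carrier Q. \<forall>I. left_ideal I Q \<and> S \<subseteq> I \<longrightarrow> q \<in> I}" for S
  have carr_li: "left_ideal (carrier Q) Q"
    by (rule left_idealI') (auto simp: Q)
  have gen_li: "left_ideal (gen S) Q" if "S \<subseteq> carrier Q" for S
  proof (rule left_idealI'[OF Q])
    show "gen S \<subseteq> carrier Q" unfolding gen_def by auto
    show "\<zero> \<in> gen S" unfolding gen_def using left_idealD(2) by auto
    show "a \<oplus> b \<in> gen S" if "a \<in> gen S" "b \<in> gen S" for a b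
      using that unfolding gen_def by (auto intro: left_idealD(3))
    show "\<ominus> a \<in> gen S" if "a \<in> gen S" for a
      using that unfolding gen_def by (auto intro: left_idealD(4))
    show "r \<otimes> a \<in> gen S" if "r \<in> carrier Q" "a \<in> gen S" for r a
      using that unfolding gen_def by (auto intro: left_idealD(5))
  qed
  have gen_sub: "S \<subseteq> gen S" if "S \<subseteq> carrier Q" for S
    using that unfolding gen_def by auto
  have gen_min: "gen S \<subseteq> I" if "left_ideal I Q" "S \<subseteq> I" for S I
    using that unfolding gen_def by auto
  define L where "L k = gen (lprod Q ` wrds H k)" for k
  have wc: "lprod Q ` wrds H k \<subseteq> carrier Q" for k
    using H lprod_closed[OF Q] unfolding wrds_def by blast
  have Lli: "left_ideal (L k) Q" for k unfolding L_def using gen_li wc by blast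
  have Lgen: "lprod Q ys \<in> L k" if "ys \<in> wrds H k" for ys k
    unfolding L_def using gen_sub[OF wc] that by blast
  have Lsuc: "L (Suc k) \<subseteq> L k" for k
    unfolding L_def[of "Suc k"]
  proof (rule gen_min[OF Lli], safe)
    fix ys assume ys: "ys \<in> wrds H (Suc k)"
    then obtain g zs where gz: "ys = g # zs" unfolding wrds_def by (cases ys) auto
    with ys have "zs \<in> wrds H k" "g \<in> carrier Q" using H unfolding wrds_def by auto
    then show "lprod Q ys \<in> L k" using gz left_idealD(5)[OF Lli] Lgen by simp
  qed
  have Lmono: "L (Suc j) \<subseteq> L (Suc k)" if jk: "L j \<subseteq> L k" for j k
    unfolding L_def[of "Suc j"]
  proof (rule gen_min[OF Lli], safe)
    fix ys assume ys: "ys \<in> wrds H (Suc j)"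
    then obtain g zs where gz: "ys = zs @ [g]" unfolding wrds_def
      by (cases ys rule: rev_cases) auto
    with ys have zs: "zs \<in> wrds H j" and g: "g \<in> carrier Q" using H unfolding wrds_def by auto
    define J where "J = {q\<in>carrier Q. q \<otimes> g \<in> L (Suc k)}"
    have "left_ideal J Q"
    proof (rule left_idealI'[OF Q])
      show "J \<subseteq> carrier Q" unfolding J_def by auto
      show "\<zero> \<in> J" unfolding J_def using left_idealD(2)[OF Lli] g by auto
      show "a \<oplus> b \<in> J" if "a \<in> J" "b \<in> J" for a b
        using that left_idealD(3)[OF Lli] g unfolding J_def by (auto simp: l_distr)
      show "\<ominus> a \<in> J" if "a \<in> J" for a
        using that left_idealD(4)[OF Lli] g unfolding J_def by (auto simp: l_minus)
      show "r \<otimes> a \<in> J" if "r \<in> carrier Q" "a \<in> J" for r a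
        using that left_idealD(5)[OF Lli] g unfolding J_def by (auto simp: m_assoc)
    qed
    moreover have "lprod Q ` wrds H k \<subseteq> J"
    proof safe
      fix ws assume ws: "ws \<in> wrds H k"
      then have "ws @ [g] \<in> wrds H (Suc k)" using ys gz unfolding wrds_def by auto
      then have "lprod Q (ws @ [g]) \<in> L (Suc k)" by (rule Lgen)
      moreover have "set ws \<subseteq> carrier Q" using ws H unfolding wrds_def by auto
      ultimately show "lprod Q ws \<in> J" unfolding J_def
        using lprod_snoc[OF Q _ g] lprod_closed[OF Q] by auto
    qed
    ultimately have "L k \<subseteq> J" unfolding L_def by (rule gen_min)
    with jk have "lprod Q zs \<in> J" using Lgen[OF zs] by blast
    moreover have "set zs \<subseteq> carrier Q" using zs H unfolding wrds_def by auto
    ultimately show "lprod Q ys \<in> L (Suc k)" unfolding J_def gz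
      using lprod_snoc[OF Q _ g] by auto
  qed
  have anti: "L (k + n) \<subseteq> L k" for k n
    by (induction n) (use Lsuc in auto)
  have stable: "L (k + n) = L k" if "L k = L (Suc k)" for k n
  proof (induction n)
    case (Suc n)
    have "L (Suc (k + n)) = L (Suc k)"
      using Lmono[of k "k+n"] Lmono[of "k+n" k] Suc by auto
    then show ?case using that by simp
  qed simp
  have Lm: "L m \<subseteq> {\<zero>}"
    unfolding L_def
  proof (rule gen_min)
    show "left_ideal {\<zero>} Q" by (rule left_idealI'[OF Q]) auto
    show "lprod Q ` wrds H m \<subseteq> {\<zero>}" using nil by auto
  qed
  have strict: "L (Suc k) \<subset> L k" if "k \<le> t" for k
  proof -
    have "L k \<noteq> L (Suc k)"
    proof
      assume "L k = L (Suc k)"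
      then have "L k = L (k + m)" using stable by metis
      also have "\<dots> \<subseteq> L m" using anti[of m k] by (simp add: add.commute)
      finally have "L k \<subseteq> {\<zero>}" using Lm by blast
      moreover have "L t \<subseteq> L k" using anti[of k "t - k"] that by simp
      ultimately show False using Lgen[OF xs(1)] xs(2) by blast
    qed
    then show ?thesis using Lsuc by blast
  qed
  define C where "C i = L (Suc t - i)" for i
  have "(\<forall>i\<le>Suc t. left_ideal (C i) Q) \<and> (\<forall>i<Suc t. C i \<subset> C (Suc i))"
  proof (intro conjI allI impI)
    fix i show "left_ideal (C i) Q" unfolding C_def by (rule Lli)
  next
    fix i assume "i < Suc t"
    then have "Suc t - i = Suc (t - i)" "Suc t - Suc i = t - i" by auto
    then show "C i \<subset> C (Suc i)" unfolding C_def using strict[of "t - i"] by simp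
  qed
  then show False using len unfolding left_length_def by blast
qed

lemma ideal_facts:
  assumes "ideal I R"
  shows "I \<subseteq> carrier R" "\<zero>\<^bsub>R\<^esub> \<in> I" "\<And>a b. a\<in>I \<Longrightarrow> b\<in>I \<Longrightarrow> a \<oplus>\<^bsub>R\<^esub> b \<in> I"
    "\<And>a. a\<in>I \<Longrightarrow> \<ominus>\<^bsub>R\<^esub> a \<in> I"
    "\<And>r a. r \<in> carrier R \<Longrightarrow> a\<in>I \<Longrightarrow> r \<otimes>\<^bsub>R\<^esub> a \<in> I"
    "\<And>r a. r \<in> carrier R \<Longrightarrow> a\<in>I \<Longrightarrow> a \<otimes>\<^bsub>R\<^esub> r \<in> I"
proof -
  have S: "additive_subgroup I R" by (rule ideal.axioms(1)[OF assms])
  show "I \<subseteq> carrier R" by (rule additive_subgroup.a_subset[OF S])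
  show "\<zero>\<^bsub>R\<^esub> \<in> I" by (rule additive_subgroup.zero_closed[OF S])
  show "\<And>a b. a\<in>I \<Longrightarrow> b\<in>I \<Longrightarrow> a \<oplus>\<^bsub>R\<^esub> b \<in> I" by (rule additive_subgroup.a_closed[OF S])
  show "\<And>a. a\<in>I \<Longrightarrow> \<ominus>\<^bsub>R\<^esub> a \<in> I" by (rule additive_subgroup.a_inv_closed[OF S])
  show "\<And>r a. r \<in> carrier R \<Longrightarrow> a\<in>I \<Longrightarrow> r \<otimes>\<^bsub>R\<^esub> a \<in> I"
    by (rule ideal.I_l_closed[OF assms])
  show "\<And>r a. r \<in> carrier R \<Longrightarrow> a\<in>I \<Longrightarrow> a \<otimes>\<^bsub>R\<^esub> r \<in> I"
    by (rule ideal.I_r_closed[OF assms])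
qed

lemma nilp:
  fixes B :: "('a, 'b) ring_scheme"
  assumes B: "ring B" and sub: "subring A B"
    and G: "G \<subseteq> prime_radical (B\<lparr>carrier := A\<rparr>)" "finite G"
  shows "\<exists>m. \<forall>xs\<in>wrds G m. lprod B xs = \<zero>\<^bsub>B\<^esub>"
proof (rule ccontr)
  interpret B: ring B by fact
  define A' where "A' = B\<lparr>carrier := A\<rparr>"
  interpret A': ring A' unfolding A'_def by (rule B.subring_is_ring[OF sub])
  have ops: "carrier A' = A" "monoid.mult A' = monoid.mult B" "ring.add A' = ring.add B" "ring.zero A' = ring.zero B" "monoid.one A' = monoid.one B"
    by (simp_all add: A'_def)
  have lp: "lprod A' xs = lprod B xs" for xs by (simp add: lprod_def ops)
  have GA: "G \<subseteq> A" using G unfolding prime_radical_def A'_def by auto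
  have lpA: "lprod A' xs \<in> A" if "xs \<in> wrds G k" for xs k
    using lprod_closed[OF A'.ring_axioms, of xs] that GA ops(1) unfolding wrds_def by auto
  assume "\<not> ?thesis"
  hence nz: "\<forall>m. \<exists>xs\<in>wrds G m. lprod A' xs \<noteq> \<zero>\<^bsub>A'\<^esub>" by (auto simp: lp ops)
  define F where "F = {I. ideal I A' \<and> (\<forall>m. \<exists>xs\<in>wrds G m. lprod A' xs \<notin> I)}"
  have "\<exists>M\<in>F. \<forall>Z\<in>F. M \<subseteq> Z \<longrightarrow> Z = M"
  proof (rule Zorn_Lemma2, safe)
    fix C assume C: "C \<in> chains F"
    show "\<exists>U\<in>F. \<forall>Z\<in>C. Z \<subseteq> U"
    proof (cases "C = {}")
      case True
      have "{\<zero>\<^bsub>A'\<^esub>} \<in> F" unfolding F_def using A'.zeroideal nz by auto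
      then show ?thesis using True by blast
    next
      case False
      have CF: "C \<subseteq> F" and ch: "\<And>Z W. Z \<in> C \<Longrightarrow> W \<in> C \<Longrightarrow> Z \<subseteq> W \<or> W \<subseteq> Z"
        using C by (auto simp: chains_def chain_subset_def)
      have CI: "ideal Z A'" if "Z \<in> C" for Z using CF that unfolding F_def by auto
      have "ideal (\<Union>C) A'"
      proof (rule idealI[OF A'.ring_axioms])
        show "subgroup (\<Union>C) (add_monoid A')"
        proof (rule A'.add.subgroupI)
          show "\<Union>C \<subseteq> carrier A'"
          proof
            fix x assume "x \<in> \<Union>C"
            then obtain Z where "Z \<in> C" "x \<in> Z" by blast
            then show "x \<in> carrier A'" using ideal_facts(1)[OF CI[of Z]] by blast
          qed
          obtain Z where "Z \<in> C" using False by blast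
          then have "\<zero>\<^bsub>A'\<^esub> \<in> \<Union>C" using ideal_facts(2)[OF CI[of Z]] by blast
          then show "\<Union>C \<noteq> {}" by blast
          show "\<ominus>\<^bsub>A'\<^esub> a \<in> \<Union>C" if "a \<in> \<Union>C" for a
          proof -
            from that obtain Z where "Z \<in> C" "a \<in> Z" by blast
            then show ?thesis using ideal_facts(4)[OF CI[of Z]] by blast
          qed
          show "a \<oplus>\<^bsub>A'\<^esub> b \<in> \<Union>C" if "a \<in> \<Union>C" "b \<in> \<Union>C" for a b
          proof -
            from that obtain Z W where XY: "Z \<in> C" "W \<in> C" "a \<in> Z" "b \<in> W" by blast
            show ?thesis
            proof (cases "Z \<subseteq> W")
              case True then show ?thesis using XY CI[of W] ideal_facts(3)[of W A' a b] by auto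
            next
              case False then have "W \<subseteq> Z" using ch XY by blast
              then show ?thesis using XY CI[of Z] ideal_facts(3)[of Z A' a b] by auto
            qed
          qed
        qed
        show "x \<otimes>\<^bsub>A'\<^esub> a \<in> \<Union>C" if "a \<in> \<Union>C" "x \<in> carrier A'" for a x
        proof -
          from that obtain Z where "Z \<in> C" "a \<in> Z" by blast
          then show ?thesis using ideal_facts(5)[OF CI[of Z] that(2)] by blast
        qed
        show "a \<otimes>\<^bsub>A'\<^esub> x \<in> \<Union>C" if "a \<in> \<Union>C" "x \<in> carrier A'" for a x
        proof -
          from that obtain Z where "Z \<in> C" "a \<in> Z" by blast
          then show ?thesis using ideal_facts(6)[OF CI[of Z] that(2)] by blast
        qed
      qed
      moreover have "\<exists>xs\<in>wrds G m. lprod A' xs \<notin> \<Union>C" for m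
      proof (rule ccontr)
        assume "\<not> ?thesis"
        then have sub1: "lprod A' ` wrds G m \<subseteq> \<Union>C" by auto
        have "finite (wrds G m)" using finite_lists_length_eq[OF G(2), of m]
          unfolding wrds_def by (simp add: conj_commute)
        then have "finite (lprod A' ` wrds G m)" by simp
        then obtain U where "U \<in> C" "lprod A' ` wrds G m \<subseteq> U"
          using finite_subset_Union_chain[OF _ sub1 False, of UNIV] C
          by (auto simp: chains_def chain_subset_alt_def)
        then show False using CF unfolding F_def by blast
      qed
      ultimately have "\<Union>C \<in> F" unfolding F_def by auto
      then show ?thesis by blast
    qed
  qed
  then obtain P where P: "P \<in> F" and max: "\<And>Z. Z \<in> F \<Longrightarrow> P \<subseteq> Z \<Longrightarrow> Z = P" by blast
  have Pid: "ideal P A'" using P unfolding F_def by auto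
  have Pw: "\<exists>xs\<in>wrds G m. lprod A' xs \<notin> P" for m using P unfolding F_def by auto
  have bigger: "\<exists>m. \<forall>xs\<in>wrds G m. lprod A' xs \<in> I <+>\<^bsub>A'\<^esub> P"
    if I: "ideal I A'" and nI: "\<not> I \<subseteq> P" for I
  proof -
    have IP: "ideal (I <+>\<^bsub>A'\<^esub> P) A'" by (rule A'.add_ideals[OF I Pid])
    have "P \<subseteq> I <+>\<^bsub>A'\<^esub> P"
    proof
      fix p assume p: "p \<in> P"
      then have "p = \<zero>\<^bsub>A'\<^esub> \<oplus>\<^bsub>A'\<^esub> p" using ideal_facts(1)[OF Pid] by auto
      then show "p \<in> I <+>\<^bsub>A'\<^esub> P" using p ideal_facts(2)[OF I] unfolding set_add_def' by blast
    qed
    moreover have "I \<subseteq> I <+>\<^bsub>A'\<^esub> P"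
    proof
      fix p assume p: "p \<in> I"
      then have "p = p \<oplus>\<^bsub>A'\<^esub> \<zero>\<^bsub>A'\<^esub>" using ideal_facts(1)[OF I] by auto
      then show "p \<in> I <+>\<^bsub>A'\<^esub> P" using p ideal_facts(2)[OF Pid] unfolding set_add_def' by blast
    qed
    ultimately have "I <+>\<^bsub>A'\<^esub> P \<notin> F" using max nI by blast
    then show ?thesis using IP unfolding F_def by auto
  qed
  have prime: "nc_prime_ideal A' P"
    unfolding nc_prime_ideal_def
  proof (intro conjI allI impI)
    show "ideal P A'" by (rule Pid)
    show "P \<noteq> carrier A'" using Pw[of 0] lpA ops(1) by blast
    fix I J assume I: "ideal I A'" and J: "ideal J A'" and prod: "\<forall>i\<in>I. \<forall>j\<in>J. i \<otimes>\<^bsub>A'\<^esub> j \<in> P"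
    show "I \<subseteq> P \<or> J \<subseteq> P"
    proof (rule ccontr)
      assume "\<not> (I \<subseteq> P \<or> J \<subseteq> P)"
      then obtain m1 m2 where m1: "\<forall>xs\<in>wrds G m1. lprod A' xs \<in> I <+>\<^bsub>A'\<^esub> P"
        and m2: "\<forall>xs\<in>wrds G m2. lprod A' xs \<in> J <+>\<^bsub>A'\<^esub> P"
        using bigger I J by meson
      obtain xs where xs: "xs \<in> wrds G (m1 + m2)" "lprod A' xs \<notin> P" using Pw by blast
      have t: "take m1 xs \<in> wrds G m1" and d: "drop m1 xs \<in> wrds G m2"
        using xs(1) unfolding wrds_def by (auto dest: in_set_takeD in_set_dropD)
      have "set (take m1 xs) \<subseteq> carrier A'" "set (drop m1 xs) \<subseteq> carrier A'"
        using t d GA ops(1) unfolding wrds_def by auto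
      then have eq: "lprod A' xs = lprod A' (take m1 xs) \<otimes>\<^bsub>A'\<^esub> lprod A' (drop m1 xs)"
        using lprod_append[OF A'.ring_axioms] by (metis append_take_drop_id)
      obtain i p where ip: "i \<in> I" "p \<in> P" "lprod A' (take m1 xs) = i \<oplus>\<^bsub>A'\<^esub> p"
        using m1 t unfolding set_add_def' by blast
      obtain j q where jq: "j \<in> J" "q \<in> P" "lprod A' (drop m1 xs) = j \<oplus>\<^bsub>A'\<^esub> q"
        using m2 d unfolding set_add_def' by blast
      have c: "i \<in> carrier A'" "p \<in> carrier A'" "j \<in> carrier A'" "q \<in> carrier A'"
        using ip jq ideal_facts(1)[OF I] ideal_facts(1)[OF J] ideal_facts(1)[OF Pid] by auto
      have "(i \<oplus>\<^bsub>A'\<^esub> p) \<otimes>\<^bsub>A'\<^esub> (j \<oplus>\<^bsub>A'\<^esub> q) =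
          (i \<otimes>\<^bsub>A'\<^esub> j \<oplus>\<^bsub>A'\<^esub> p \<otimes>\<^bsub>A'\<^esub> j) \<oplus>\<^bsub>A'\<^esub> (i \<otimes>\<^bsub>A'\<^esub> q \<oplus>\<^bsub>A'\<^esub> p \<otimes>\<^bsub>A'\<^esub> q)"
        using c by (simp add: A'.l_distr A'.r_distr)
      also have "\<dots> \<in> P"
        using prod ip jq c ideal_facts(3,5,6)[OF Pid] by simp
      finally show False using xs(2) eq ip(3) jq(3) by simp
    qed
  qed
  then have "G \<subseteq> P" using G unfolding prime_radical_def A'_def by auto
  obtain xs where xs: "xs \<in> wrds G 1" "lprod A' xs \<notin> P" using Pw by blast
  then obtain g where "xs = [g]" "g \<in> G" unfolding wrds_def by (auto simp: length_Suc_conv)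
  moreover then have "g \<in> carrier A'" using GA ops(1) by auto
  ultimately show False using xs(2) \<open>G \<subseteq> P\<close> A'.r_one by auto
qed

lemma chain_phi:
  assumes R: "ring R" and Q: "ring Q" and h: "phi \<in> ring_hom R Q" and inj: "inj_on phi (carrier R)"
    and len: "left_length Q t" and G: "G \<subseteq> carrier R"
    and nil: "\<forall>xs\<in>wrds G m. lprod R xs = \<zero>\<^bsub>R\<^esub>"
  shows "\<forall>xs\<in>wrds G t. lprod R xs = \<zero>\<^bsub>R\<^esub>"
proof
  have hz: "phi \<zero>\<^bsub>R\<^esub> = \<zero>\<^bsub>Q\<^esub>" by (rule ring_hom_zero[OF h R Q])
  have H: "phi ` G \<subseteq> carrier Q" using G ring_hom_closed[OF h] by auto
  have "\<forall>ys\<in>wrds (phi ` G) m. lprod Q ys = \<zero>\<^bsub>Q\<^esub>"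
  proof
    fix ys assume ys: "ys \<in> wrds (phi ` G) m"
    then have "ys \<in> lists (phi ` G)" unfolding wrds_def by auto
    then obtain zs where zs: "zs \<in> lists G" "ys = map phi zs" unfolding lists_image by auto
    then have "zs \<in> wrds G m" using ys unfolding wrds_def by auto
    then show "lprod Q ys = \<zero>\<^bsub>Q\<^esub>" using zs nil lprod_map[OF h _ R, of zs] G hz by auto
  qed
  from chain_lemma[OF Q len H this]
  have *: "\<forall>ys\<in>wrds (phi ` G) t. lprod Q ys = \<zero>\<^bsub>Q\<^esub>" .
  fix xs assume xs: "xs \<in> wrds G t"
  then have "map phi xs \<in> wrds (phi ` G) t" unfolding wrds_def by auto
  then have "phi (lprod R xs) = phi \<zero>\<^bsub>R\<^esub>" using * lprod_map[OF h _ R, of xs] xs G hz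
    unfolding wrds_def by auto
  moreover have "lprod R xs \<in> carrier R" using lprod_closed[OF R] xs G unfolding wrds_def by auto
  ultimately show "lprod R xs = \<zero>\<^bsub>R\<^esub>" using inj inj_onD ring.ring_simprules(2)[OF R] by metis
qed

lemma lprod_opp: "ring B \<Longrightarrow> set ys \<subseteq> carrier B \<Longrightarrow> lprod (opp_ring B) ys = lprod B (rev ys)"
proof (induction ys)
  case Nil then show ?case by (simp add: opp_ring_def)
next
  case (Cons y ys)
  then have "lprod (opp_ring B) (y # ys) = lprod B (rev ys) \<otimes>\<^bsub>B\<^esub> y" by (simp add: opp_ring_def)
  also have "\<dots> = lprod B (rev (y # ys))" using lprod_snoc[of B "rev ys" y] Cons.prems by simp
  finally show ?case .
qed

theorem lemma2p8:
  fixes B :: "('a, 'b) ring_scheme" and A :: "'a set"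
    and Q :: "('q, 'c) ring_scheme" and phi :: "'a \<Rightarrow> 'q" and t :: nat
  assumes "prime_ring B"
    and "subring A B"
    and "(left_goldie B \<and> classical_left_quotient B Q phi \<and> left_length Q t) \<or>
         (right_goldie B \<and> classical_right_quotient B Q phi \<and> right_length Q t)"
  shows "\<forall>xs. length xs = t \<and> set xs \<subseteq> prime_radical (B\<lparr>carrier := A\<rparr>) \<longrightarrow>
           foldr (\<otimes>\<^bsub>B\<^esub>) xs \<one>\<^bsub>B\<^esub> = \<zero>\<^bsub>B\<^esub>"
proof (intro allI impI)
  fix xs assume xs: "length xs = t \<and> set xs \<subseteq> prime_radical (B\<lparr>carrier := A\<rparr>)"
  have B: "ring B" using assms(1) unfolding prime_ring_def by auto
  obtain m where m: "\<forall>ys\<in>wrds (set xs) m. lprod B ys = \<zero>\<^bsub>B\<^esub>"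
    using nilp[OF B assms(2)] xs by blast
  have GB: "set xs \<subseteq> carrier B" using xs subringE(1)[OF assms(2)]
    unfolding prime_radical_def by auto
  have xw: "xs \<in> wrds (set xs) t" using xs unfolding wrds_def by auto
  from assms(3) show "foldr (\<otimes>\<^bsub>B\<^esub>) xs \<one>\<^bsub>B\<^esub> = \<zero>\<^bsub>B\<^esub>"
  proof
    assume "left_goldie B \<and> classical_left_quotient B Q phi \<and> left_length Q t"
    then have Q: "ring Q" "phi \<in> ring_hom B Q" "inj_on phi (carrier B)" "left_length Q t"
      unfolding classical_left_quotient_def by auto
    show ?thesis using chain_phi[OF B Q GB m] xw unfolding lprod_def by auto
  next
    assume "right_goldie B \<and> classical_right_quotient B Q phi \<and> right_length Q t"
    then have Q: "ring (opp_ring B)" "ring (opp_ring Q)" "phi \<in> ring_hom (opp_ring B) (opp_ring Q)"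
      "inj_on phi (carrier (opp_ring B))" "left_length (opp_ring Q) t"
      unfolding classical_right_quotient_def classical_left_quotient_def right_length_def by auto
    have c: "carrier (opp_ring B) = carrier B" "\<zero>\<^bsub>opp_ring B\<^esub> = \<zero>\<^bsub>B\<^esub>"
      by (simp_all add: opp_ring_def)
    have "\<forall>ys\<in>wrds (set xs) m. lprod (opp_ring B) ys = \<zero>\<^bsub>opp_ring B\<^esub>"
    proof
      fix ys assume ys: "ys \<in> wrds (set xs) m"
      then have "rev ys \<in> wrds (set xs) m" unfolding wrds_def by auto
      then show "lprod (opp_ring B) ys = \<zero>\<^bsub>opp_ring B\<^esub>"
        using m lprod_opp[OF B, of ys] ys GB c unfolding wrds_def by auto
    qed
    from chain_phi[OF Q(1,2,3,4,5) _ this] GB c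
    have "\<forall>ys\<in>wrds (set xs) t. lprod (opp_ring B) ys = \<zero>\<^bsub>B\<^esub>" by auto
    moreover have "rev xs \<in> wrds (set xs) t" using xw unfolding wrds_def by auto
    ultimately have "lprod B (rev (rev xs)) = \<zero>\<^bsub>B\<^esub>" using lprod_opp[OF B, of "rev xs"] GB by auto
    then show ?thesis unfolding lprod_def by simp
  qed
qed

end
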